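(* Under the setting below, for any $\epsilon>0$, $$\mathcal{N}_{\mathcal{F}}(\epsilon)\le\mathcal{Z}_{\mathcal{F}}\big(\alpha\epsilon/(8|\mathcal{O}|^{H+1}|\mathcal{A}|^HH|\mathcal{U}_A|^2|\mathcal{U}|)\big).$$
   Context: Process: finite $\mathcal{O},\mathcal{A}$, horizon $H$; histories $\tau_h=(o_1,a_1,\dots,o_h,a_h)$; policies pick $a_h\sim\pi_h(\cdot\mid\tau_{h-1},o_h)$; $\pi(\tau_h)=\prod_{l\le h}\pi_l(a_l\mid\tau_{l-1},o_l)$; $\mathbb{P}^\pi_f(\tau_H)$ is the probability of $\tau_H$ under $\pi$ in model $f$. For a model $f$, a test starting at step $h$ is $t=(o_h,\dots,o_{h+W-1},a_h,\dots,a_{h+W-2})$; $\mathbb{P}_f(t\mid\tau_{h-1})$ is the probability of observing $o_{h:h+W-1}$ when executing $a_{h:h+W-2}$ after $\tau_{h-1}$ ($0$ if unreachable). A set $\mathcal{U}_h$ of tests starting at $h$ is a core test set if for every test $t$ starting at $h$ there is a history-independent $m_{t,h;f}$ with $\mathbb{P}_f(t\mid\tau_{h-1})=\langle m_{t,h;f},q_{\tau_{h-1};f}\rangle$, $q_{\tau_{h-1};f}=[\mathbb{P}_f(u\mid\tau_{h-1})]_{u\in\mathcal{U}_h}$; $q_{0;f}=[\mathbb{P}_f(u)]_{u\in\mathcal{U}_1}$; $M_{o,a,h;f}$ has rows $m_{(o,a,u),h;f}^\top$, $u\in\mathcal{U}_{h+1}$. $\mathcal{U}_{A,h}$: action sequences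 in $\mathcal{U}_h$; $|\mathcal{U}_A|=\max_h|\mathcal{U}_{A,h}|$; $|\mathcal{U}|=\max_h|\mathcal{U}_h|$. $d_{\mathrm{PSR},h;f}$ is the rank of the matrix with entries $\mathbb{P}_f(t\mid\tau_h)$. Core matrix $K_{h;f}$ ($h\ge1$): columns $q_{\tau_h^1;f},\dots,q_{\tau_h^{d_{\mathrm{PSR},h;f}};f}$ for histories whose predictive states span all $q_{\tau_h;f}$, chosen to minimize $\|K_{h;f}^\dagger\|_{1\to1}$; $K_{0;f}=q_{0;f}$. Standing assumptions: the true process $f^*$ is in $\mathcal{F}$; every $f\in\mathcal{F}$ is a valid PSR with core test sets $\{\mathcal{U}_h\}_{h\in[H]}$ and $\|K_{h;f}^\dagger\|_{1\to1}\le1/\alpha$ for $h\in\{0,\dots,H-1\}$; every $o\in\mathcal{O}$ belongs to $\mathcal{U}_H$, and $m_{o,H;f}=e_o$ (standard basis vector indexing $o$ in $\mathcal{U}_H$). Convention: for $f\in\mathcal{F}$ the vectors $m_{(o,a,u),h;f}$ lie in the column space of $K_{h-1;f}$. Bracket number: a size-$N$ $\epsilon$-bracket of $\mathcal{F}$ is $\{(g_1^i,g_2^i)\}_{i=1}^N$ of real functions of (policy, $\tau_H$) with $\sum_{\tau_H}|g_1^i(\pi,\tau_H)-g_2^i(\pi,\tau_H)|\le\epsilon$ for all $\pi,i$, such that each $f\in\mathcal{F}$ has some $i$ with $g_1^i(\pi,\tau_H)\le\mathbb{P}^\pi_f(\tau_H)\le g_2^i(\pi,\tau_H)$ for all $\tau_H,\pi$;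 $\mathcal{N}_{\mathcal{F}}(\epsilon)$ is the minimal $N$. Covering number: $\mathcal{Z}_{\mathcal{F}}(\epsilon)$ is the minimal $n$ such that there is a set $\mathcal{F}'$ of $n$ parameter tuples $\{m'_{(o,a,u),h},q'_0\}$ (not necessarily valid PSRs) such that for every $f\in\mathcal{F}$ some element satisfies $\max_{o,a,h\in[H-1],u\in\mathcal{U}_{h+1}}\|m_{(o,a,u),h;f}-m'_{(o,a,u),h}\|_\infty\le\epsilon$ and $\|q_{0;f}-q'_0\|_\infty\le\epsilon$. *)

theory Defs
  imports "HOL-Analysis.Analysis" "HOL-Library.Extended_Nat"
begin

type_synonym ('ob,'a) hist = "('ob \<times> 'a) list"

(* A (controlled) process / model f over horizon H is given by its conditional
   observation probabilities: f tau ob = P_f(o_{h} = ob | tau_{h-1} = tau, length tau = h-1). *)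
type_synonym ('ob,'a) model = "('ob,'a) hist \<Rightarrow> 'ob \<Rightarrow> real"

(* A policy: pi tau ob a = pi_h(a | tau_{h-1} = tau, o_h = ob), with h = length tau + 1. *)
type_synonym ('ob,'a) policy = "('ob,'a) hist \<Rightarrow> 'ob \<Rightarrow> 'a \<Rightarrow> real"

(* A test (o_h,...,o_{h+W-1}, a_h,...,a_{h+W-2}) : observation list and action list. *)
type_synonym ('ob,'a) test = "'ob list \<times> 'a list"

definition valid_model :: "nat \<Rightarrow> ('ob::finite,'a) model \<Rightarrow> bool" where
  "valid_model H f \<longleftrightarrow>
     (\<forall>\<tau>. length \<tau> < H \<longrightarrow> (\<forall>ob. 0 \<le> f \<tau> ob) \<and> (\<Sum>ob\<in>UNIV. f \<tau> ob) = 1)"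

definition valid_policy :: "('ob,'a::finite) policy \<Rightarrow> bool" where
  "valid_policy \<pi> \<longleftrightarrow> (\<forall>\<tau> ob. (\<forall>a. 0 \<le> \<pi> \<tau> ob a) \<and> (\<Sum>a\<in>UNIV. \<pi> \<tau> ob a) = 1)"

definition traj_prob :: "('ob,'a) model \<Rightarrow> ('ob,'a) policy \<Rightarrow> ('ob,'a) hist \<Rightarrow> real" where
  "traj_prob f \<pi> \<tau> =
     (\<Prod>i<length \<tau>. f (take i \<tau>) (fst (\<tau> ! i)) * \<pi> (take i \<tau>) (fst (\<tau> ! i)) (snd (\<tau> ! i)))"

definition reach_prob :: "('ob,'a) model \<Rightarrow> ('ob,'a) hist \<Rightarrow> real" where
  "reach_prob f \<tau> = (\<Prod>i<length \<tau>. f (take i \<tau>) (fst (\<tau> ! i)))"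

definition test_prob :: "('ob,'a) model \<Rightarrow> ('ob,'a) hist \<Rightarrow> ('ob,'a) test \<Rightarrow> real" where
  "test_prob f \<tau> t =
     (if reach_prob f \<tau> = 0 then 0
      else (\<Prod>i<length (fst t). f (\<tau> @ zip (take i (fst t)) (take i (snd t))) (fst t ! i)))"

definition is_test :: "nat \<Rightarrow> nat \<Rightarrow> ('ob,'a) test \<Rightarrow> bool" where
  "is_test H h t \<longleftrightarrow> 1 \<le> h \<and> length (fst t) = length (snd t) + 1 \<and> h + length (snd t) \<le> H"

definition core_tests :: "nat \<Rightarrow> (nat \<Rightarrow> ('ob,'a) test set) \<Rightarrow> ('ob,'a) model \<Rightarrow> bool" where
  "core_tests H U f \<longleftrightarrow>
     (\<forall>h\<in>{1..H}. finite (U h) \<and> (\<forall>u\<in>U h. is_test H h u) \<and>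
        (\<forall>t. is_test H h t \<longrightarrow>
           (\<exists>m::('ob,'a) test \<Rightarrow> real. \<forall>\<tau>. length \<tau> = h - 1 \<longrightarrow>
              test_prob f \<tau> t = (\<Sum>u\<in>U h. m u * test_prob f \<tau> u))))"

definition indep_cols :: "('ob,'a) test set \<Rightarrow> ('ob,'a) model \<Rightarrow> ('ob,'a) hist list \<Rightarrow> bool" where
  "indep_cols R f \<tau>s \<longleftrightarrow>
     (\<forall>c::nat \<Rightarrow> real. (\<forall>r\<in>R. (\<Sum>i<length \<tau>s. c i * test_prob f (\<tau>s ! i) r) = 0)
        \<longrightarrow> (\<forall>i<length \<tau>s. c i = 0))"

(* d_{PSR,h;f}: rank of the matrix [P_f(t | tau_h)], t a test starting at h+1, tau_h of length h *)
definition d_psr :: "nat \<Rightarrow> ('ob,'a) model \<Rightarrow> nat \<Rightarrow> nat" where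
  "d_psr H f h = Max {length \<tau>s | \<tau>s. (\<forall>\<tau>\<in>set \<tau>s. length \<tau> = h) \<and>
                        indep_cols {t. is_test H (h+1) t} f \<tau>s}"

(* X is the Moore-Penrose pseudo-inverse of the R x d matrix K (rows indexed by R, columns by i<d);
   X is d x R, written X i r. *)
definition is_pinv :: "('t set) \<Rightarrow> nat \<Rightarrow> ('t \<Rightarrow> nat \<Rightarrow> real) \<Rightarrow> (nat \<Rightarrow> 't \<Rightarrow> real) \<Rightarrow> bool" where
  "is_pinv R d K X \<longleftrightarrow>
     (let KX = (\<lambda>r s. \<Sum>i<d. K r i * X i s); XK = (\<lambda>i j. \<Sum>r\<in>R. X i r * K r j) in
       (\<forall>r\<in>R. \<forall>j<d. (\<Sum>s\<in>R. KX r s * K s j) = K r j) \<and>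
       (\<forall>i<d. \<forall>r\<in>R. (\<Sum>j<d. XK i j * X j r) = X i r) \<and>
       (\<forall>r\<in>R. \<forall>s\<in>R. KX r s = KX s r) \<and>
       (\<forall>i<d. \<forall>j<d. XK i j = XK j i))"

definition norm11_le :: "('t set) \<Rightarrow> nat \<Rightarrow> (nat \<Rightarrow> 't \<Rightarrow> real) \<Rightarrow> real \<Rightarrow> bool" where
  "norm11_le R d X c \<longleftrightarrow> (\<forall>r\<in>R. (\<Sum>i<d. \<bar>X i r\<bar>) \<le> c)"

(* \<parallel>K_{h;f}^\<dagger>\<parallel>_{1\<rightarrow>1} \<le> c, where K_{h;f} minimises this norm over admissible choices
   (a minimum over the finitely many choices is \<le> c iff some admissible choice is \<le> c). *)
definition core_matrix_bound :: "nat \<Rightarrow> (nat \<Rightarrow> ('ob,'a) test set) \<Rightarrow> ('ob::finite,'a::finite) model \<Rightarrow> nat \<Rightarrow> real \<Rightarrow> bool" where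
  "core_matrix_bound H U f h c \<longleftrightarrow>
     (if h = 0 then
        (\<exists>X. is_pinv (U 1) 1 (\<lambda>u i. test_prob f [] u) X \<and> norm11_le (U 1) 1 X c)
      else
        (\<exists>\<tau>s. length \<tau>s = d_psr H f h \<and> (\<forall>\<tau>\<in>set \<tau>s. length \<tau> = h) \<and>
           (\<forall>\<tau>. length \<tau> = h \<longrightarrow> (\<exists>a::nat \<Rightarrow> real. \<forall>u\<in>U (h+1).
               test_prob f \<tau> u = (\<Sum>i<length \<tau>s. a i * test_prob f (\<tau>s ! i) u))) \<and>
           (\<exists>X. is_pinv (U (h+1)) (length \<tau>s) (\<lambda>u i. test_prob f (\<tau>s ! i) u) X \<and>
                norm11_le (U (h+1)) (length \<tau>s) X c)))"

(* m_{t,h;f}: the vector in R^{U_h} with P_f(t|tau_{h-1}) = <m, q_{tau_{h-1};f}> for all tau_{h-1},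
   lying in the column space of K_{h-1;f} = span {q_{tau_{h-1};f}} (convention), extended by 0 off U_h. *)
definition m_vec :: "nat \<Rightarrow> (nat \<Rightarrow> ('ob,'a) test set) \<Rightarrow> ('ob::finite,'a::finite) model \<Rightarrow> nat \<Rightarrow> ('ob,'a) test \<Rightarrow> (('ob,'a) test \<Rightarrow> real)" where
  "m_vec H U f h t = (THE m. (\<forall>v. v \<notin> U h \<longrightarrow> m v = 0) \<and>
      (\<exists>c::('ob,'a) hist \<Rightarrow> real. \<forall>v\<in>U h. m v = (\<Sum>\<tau>\<in>{\<tau>. length \<tau> = h - 1}. c \<tau> * test_prob f \<tau> v)) \<and>
      (\<forall>\<tau>. length \<tau> = h - 1 \<longrightarrow> test_prob f \<tau> t = (\<Sum>v\<in>U h. m v * test_prob f \<tau> v)))"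

definition ext_test :: "'ob \<Rightarrow> 'a \<Rightarrow> ('ob,'a) test \<Rightarrow> ('ob,'a) test" where
  "ext_test ob a u = (ob # fst u, a # snd u)"

definition has_bracket :: "nat \<Rightarrow> ('ob,'a::finite) model set \<Rightarrow> real \<Rightarrow> nat \<Rightarrow> bool" where
  "has_bracket H F \<epsilon> N \<longleftrightarrow>
     (\<exists>g1 g2 :: nat \<Rightarrow> ('ob,'a) policy \<Rightarrow> ('ob,'a) hist \<Rightarrow> real.
        (\<forall>i<N. \<forall>\<pi>. valid_policy \<pi> \<longrightarrow>
            (\<Sum>\<tau>\<in>{\<tau>. length \<tau> = H}. \<bar>g1 i \<pi> \<tau> - g2 i \<pi> \<tau>\<bar>) \<le> \<epsilon>) \<and>
        (\<forall>f\<in>F. \<exists>i<N. \<forall>\<pi>. valid_policy \<pi> \<longrightarrow> (\<forall>\<tau>. length \<tau> = H \<longrightarrow>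
            g1 i \<pi> \<tau> \<le> traj_prob f \<pi> \<tau> \<and> traj_prob f \<pi> \<tau> \<le> g2 i \<pi> \<tau>)))"

(* bracket number N_F(eps) (\<infinity> if no finite bracket exists) *)
definition bracket_number :: "nat \<Rightarrow> ('ob,'a::finite) model set \<Rightarrow> real \<Rightarrow> enat" where
  "bracket_number H F \<epsilon> = Inf {enat N | N. has_bracket H F \<epsilon> N}"

(* there is a set of n parameter tuples {m'_{(ob,a,u),h}, q'_0} eps-covering F *)
definition has_cover :: "nat \<Rightarrow> (nat \<Rightarrow> ('ob,'a) test set) \<Rightarrow> ('ob::finite,'a::finite) model set \<Rightarrow> real \<Rightarrow> nat \<Rightarrow> bool" where
  "has_cover H U F \<epsilon> n \<longleftrightarrow>
     (\<exists>(M' :: nat \<Rightarrow> 'ob \<Rightarrow> 'a \<Rightarrow> nat \<Rightarrow> ('ob,'a) test \<Rightarrow> ('ob,'a) test \<Rightarrow> real)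
        (Q' :: nat \<Rightarrow> ('ob,'a) test \<Rightarrow> real).
        \<forall>f\<in>F. \<exists>i<n.
          (\<forall>ob a. \<forall>h\<in>{1..H-1}. \<forall>u\<in>U (h+1). \<forall>v\<in>U h.
              \<bar>m_vec H U f h (ext_test ob a u) v - M' i ob a h u v\<bar> \<le> \<epsilon>) \<and>
          (\<forall>v\<in>U 1. \<bar>test_prob f [] v - Q' i v\<bar> \<le> \<epsilon>))"

(* covering number Z_F(eps) (\<infinity> if no finite cover exists) *)
definition covering_number :: "nat \<Rightarrow> (nat \<Rightarrow> ('ob,'a) test set) \<Rightarrow> ('ob::finite,'a::finite) model set \<Rightarrow> real \<Rightarrow> enat" where
  "covering_number H U F \<epsilon> = Inf {enat n | n. has_cover H U F \<epsilon> n}"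

definition card_U :: "nat \<Rightarrow> (nat \<Rightarrow> ('ob,'a) test set) \<Rightarrow> nat" where
  "card_U H U = Max ((\<lambda>h. card (U h)) ` {1..H})"

definition card_UA :: "nat \<Rightarrow> (nat \<Rightarrow> ('ob,'a) test set) \<Rightarrow> nat" where
  "card_UA H U = Max ((\<lambda>h. card (snd ` U h)) ` {1..H})"

definition psr_class :: "nat \<Rightarrow> (nat \<Rightarrow> ('ob,'a) test set) \<Rightarrow> real \<Rightarrow> ('ob::finite,'a::finite) model set \<Rightarrow> bool" where
  "psr_class H U \<alpha> F \<longleftrightarrow>
     (\<forall>f\<in>F. valid_model H f \<and> core_tests H U f \<and>
        (\<forall>h\<in>{0..H-1}. core_matrix_bound H U f h (1/\<alpha>))) \<and>
     (\<forall>ob. ([ob], []) \<in> U H)"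

end

theory Submission
  imports Defs
begin


lemma finite_len: "finite {\<tau>::('o::finite \<times> 'a::finite) list. length \<tau> = n}"
  using finite_lists_length_eq[of "UNIV::('o\<times>'a) set" n] by simp

lemma card_len: "card {\<tau>::('o::finite \<times> 'a::finite) list. length \<tau> = n} = CARD('o \<times> 'a) ^ n"
  using card_lists_length_eq[of "UNIV::('o\<times>'a) set" n] by simp

lemma reach_nil[simp]: "reach_prob f [] = 1"
  by (simp add: reach_prob_def)

lemma reach_snoc: "reach_prob f (\<tau> @ [x]) = reach_prob f \<tau> * f \<tau> (fst x)"
proof -
  have "(\<Prod>i<length \<tau>. f (take i (\<tau> @ [x])) (fst ((\<tau> @ [x]) ! i))) = (\<Prod>i<length \<tau>. f (take i \<tau>) (fst (\<tau> ! i)))"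
    by (rule prod.cong) (auto simp: nth_append)
  then show ?thesis unfolding reach_prob_def by simp
qed

lemma valid_model_D:
  assumes "valid_model H f" "length \<tau> < H"
  shows "0 \<le> f \<tau> ob" "f \<tau> ob \<le> 1"
proof -
  show "0 \<le> f \<tau> ob" using assms unfolding valid_model_def by auto
  have "f \<tau> ob \<le> (\<Sum>x\<in>UNIV. f \<tau> x)"
    by (rule member_le_sum) (use assms in \<open>auto simp: valid_model_def\<close>)
  then show "f \<tau> ob \<le> 1" using assms unfolding valid_model_def by auto
qed

lemma reach_app_bounds:
  assumes "valid_model H f" "length (\<tau> @ \<omega>) \<le> H"
  shows "0 \<le> reach_prob f (\<tau> @ \<omega>) \<and> reach_prob f (\<tau> @ \<omega>) \<le> reach_prob f \<tau>"
  using assms(2)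
proof (induction \<omega> rule: rev_induct)
  case Nil
  have "0 \<le> reach_prob f \<tau>" unfolding reach_prob_def
    using assms(1) Nil by (auto intro!: prod_nonneg valid_model_D(1) simp: less_le_trans)
  then show ?case by simp
next
  case (snoc x xs)
  then have IH: "0 \<le> reach_prob f (\<tau> @ xs)" "reach_prob f (\<tau> @ xs) \<le> reach_prob f \<tau>" by auto
  have l: "length (\<tau> @ xs) < H" using snoc by auto
  have a: "0 \<le> f (\<tau>@xs) (fst x)" "f (\<tau>@xs) (fst x) \<le> 1" using valid_model_D[OF assms(1) l] by auto
  have "reach_prob f (\<tau> @ xs @ [x]) = reach_prob f (\<tau> @ xs) * f (\<tau>@xs) (fst x)"
    using reach_snoc[of f "\<tau>@xs" x] by simp
  moreover have "reach_prob f (\<tau> @ xs) * f (\<tau>@xs) (fst x) \<le> reach_prob f (\<tau> @ xs)"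
    using IH a by (simp add: mult_left_le)
  ultimately show ?case using IH a by auto
qed

lemma reach_bounds:
  assumes "valid_model H f" "length \<tau> \<le> H"
  shows "0 \<le> reach_prob f \<tau>" "reach_prob f \<tau> \<le> 1"
  using reach_app_bounds[OF assms(1), of "[]" \<tau>] assms by auto

fun tpr :: "('o,'a) model \<Rightarrow> ('o,'a) hist \<Rightarrow> 'o list \<Rightarrow> 'a list \<Rightarrow> real" where
  "tpr f \<tau> [] acts = 1"
| "tpr f \<tau> (ob # obs) acts = f \<tau> ob * tpr f (\<tau> @ [(ob, hd acts)]) obs (tl acts)"

lemma prod_tpr:
  "length obs \<le> length acts + 1 \<Longrightarrow>
   (\<Prod>i<length obs. f (\<tau> @ zip (take i obs) (take i acts)) (obs ! i)) = tpr f \<tau> obs acts"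
proof (induction obs arbitrary: \<tau> acts)
  case Nil
  then show ?case by simp
next
  case (Cons ob obs)
  show ?case
  proof (cases obs)
    case Nil
    then show ?thesis by simp
  next
    case (Cons ob' obs')
    then obtain a acts' where acts: "acts = a # acts'" using Cons.prems by (cases acts) auto
    have "(\<Prod>i<length (ob # obs). f (\<tau> @ zip (take i (ob # obs)) (take i acts)) ((ob # obs) ! i))
        = f \<tau> ob * (\<Prod>i<length obs. f (\<tau> @ zip (take (Suc i) (ob # obs)) (take (Suc i) acts)) ((ob # obs) ! Suc i))"
      by (simp add: prod.lessThan_Suc_shift del: prod.lessThan_Suc)
    also have "\<dots> = f \<tau> ob * (\<Prod>i<length obs. f ((\<tau> @ [(ob,a)]) @ zip (take i obs) (take i acts')) (obs ! i))"
      by (simp add: acts)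
    also have "\<dots> = f \<tau> ob * tpr f (\<tau> @ [(ob,a)]) obs acts'"
      using Cons.IH[of acts' "\<tau> @ [(ob,a)]"] Cons.prems acts by simp
    finally show ?thesis by (simp add: acts)
  qed
qed

lemma test_prob_tpr:
  "length (fst t) \<le> length (snd t) + 1 \<Longrightarrow>
   test_prob f \<tau> t = (if reach_prob f \<tau> = 0 then 0 else tpr f \<tau> (fst t) (snd t))"
  unfolding test_prob_def using prod_tpr[of "fst t" "snd t"] by simp



lemma tpr_bounds:
  assumes "valid_model H f" "length \<tau> + length obs \<le> H"
  shows "0 \<le> tpr f \<tau> obs acts \<and> tpr f \<tau> obs acts \<le> 1"
  using assms(2)
proof (induction obs arbitrary: \<tau> acts)
  case Nil then show ?case by simp
next
  case (Cons ob obs)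
  have IH: "0 \<le> tpr f (\<tau> @ [(ob, hd acts)]) obs (tl acts)" "tpr f (\<tau> @ [(ob, hd acts)]) obs (tl acts) \<le> 1"
    using Cons.IH[of "\<tau> @ [(ob, hd acts)]" "tl acts"] Cons.prems by auto
  have a: "0 \<le> f \<tau> ob" "f \<tau> ob \<le> 1" using valid_model_D[OF assms(1)] Cons.prems by auto
  show ?case using IH a by (simp add: mult_le_one)
qed

lemma sum_lists_Suc:
  "(\<Sum>xs\<in>{xs::'b::finite list. length xs = Suc n}. g xs) = (\<Sum>x\<in>UNIV. \<Sum>xs\<in>{xs. length xs = n}. g (x # xs))"
proof -
  have e: "{xs::'b list. length xs = Suc n} = (\<lambda>(x, xs). x # xs) ` (UNIV \<times> {xs. length xs = n})"
    by (auto simp: length_Suc_conv image_iff)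
  have i: "inj_on (\<lambda>(x::'b, xs). x # xs) (UNIV \<times> {xs. length xs = n})"
    by (auto simp: inj_on_def)
  have "(\<Sum>xs\<in>{xs::'b list. length xs = Suc n}. g xs) = (\<Sum>p\<in>UNIV \<times> {xs. length xs = n}. g (fst p # snd p))"
    unfolding e by (subst sum.reindex[OF i]) (auto intro!: sum.cong)
  also have "\<dots> = (\<Sum>x\<in>UNIV. \<Sum>xs\<in>{xs. length xs = n}. g (x # xs))"
    by (simp add: sum.cartesian_product split_def)
  finally show ?thesis .
qed

lemma finite_lists_n: "finite {xs::'b::finite list. length xs = n}"
  using finite_lists_length_eq[of "UNIV::'b set" n] by simp

lemma tpr_sum:
  assumes "valid_model H f" "length \<tau> + n \<le> H"
  shows "(\<Sum>obs\<in>{obs. length obs = n}. tpr f \<tau> obs acts) = 1"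
  using assms(2)
proof (induction n arbitrary: \<tau> acts)
  case 0
  have "{obs::'a list. length obs = 0} = {[]}" by auto
  then show ?case by simp
next
  case (Suc n)
  have "(\<Sum>obs\<in>{obs. length obs = Suc n}. tpr f \<tau> obs acts)
      = (\<Sum>x\<in>UNIV. \<Sum>xs\<in>{xs. length xs = n}. f \<tau> x * tpr f (\<tau> @ [(x, hd acts)]) xs (tl acts))"
    by (subst sum_lists_Suc) simp
  also have "\<dots> = (\<Sum>x\<in>UNIV. f \<tau> x * (\<Sum>xs\<in>{xs. length xs = n}. tpr f (\<tau> @ [(x, hd acts)]) xs (tl acts)))"
    by (simp add: sum_distrib_left)
  also have "\<dots> = (\<Sum>x\<in>UNIV. f \<tau> x)"
    using Suc.IH Suc.prems by simp
  also have "\<dots> = 1" using assms(1) Suc.prems unfolding valid_model_def by auto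
  finally show ?case .
qed

lemma test_prob_bounds:
  assumes "valid_model H f" "length \<tau> + length (fst t) \<le> H" "length (fst t) \<le> length (snd t) + 1"
  shows "0 \<le> test_prob f \<tau> t" "test_prob f \<tau> t \<le> 1"
  using tpr_bounds[OF assms(1,2), of "snd t"] test_prob_tpr[OF assms(3)] by auto

lemma sum_test_prob_acts:
  assumes "valid_model H f" "length \<tau> + length acts + 1 \<le> H" "finite S"
    and "\<forall>v\<in>S. snd v = acts \<and> length (fst v) = length acts + 1"
  shows "(\<Sum>v\<in>S. test_prob f \<tau> v) \<le> 1"
proof -
  have i: "inj_on fst S" using assms(4) by (auto simp: inj_on_def prod_eq_iff)
  have "(\<Sum>v\<in>S. test_prob f \<tau> v) = (\<Sum>obs\<in>fst ` S. test_prob f \<tau> (obs, acts))"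
    using assms(4) by (subst sum.reindex[OF i]) (auto intro!: sum.cong simp: prod_eq_iff)
  also have "\<dots> \<le> (\<Sum>obs\<in>{obs. length obs = length acts + 1}. test_prob f \<tau> (obs, acts))"
    apply (rule sum_mono2)
    using finite_lists_n assms(4) test_prob_bounds[OF assms(1)] assms(2) by auto
  also have "\<dots> = (if reach_prob f \<tau> = 0 then 0 else (\<Sum>obs\<in>{obs. length obs = length acts + 1}. tpr f \<tau> obs acts))"
    by (auto simp: test_prob_tpr intro!: sum.cong)
  also have "\<dots> \<le> 1" using tpr_sum[OF assms(1)] assms(2) by simp
  finally show ?thesis .
qed

lemma sum_test_prob_U:
  assumes "valid_model H f" "finite S" "\<forall>v\<in>S. is_test H h v" "length \<tau> = h - 1"
  shows "(\<Sum>v\<in>S. test_prob f \<tau> v) \<le> card (snd ` S)"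
proof -
  have "(\<Sum>v\<in>S. test_prob f \<tau> v) = (\<Sum>acts\<in>snd ` S. \<Sum>v\<in>{v\<in>S. snd v = acts}. test_prob f \<tau> v)"
    using assms(2) by (rule sum.image_gen)
  also have "\<dots> \<le> (\<Sum>acts\<in>snd ` S. 1)"
  proof (rule sum_mono)
    fix acts assume "acts \<in> snd ` S"
    then obtain v0 where v0: "v0 \<in> S" "snd v0 = acts" by auto
    show "(\<Sum>v\<in>{v\<in>S. snd v = acts}. test_prob f \<tau> v) \<le> 1"
      apply (rule sum_test_prob_acts[OF assms(1)])
      using assms v0 unfolding is_test_def by auto
  qed
  finally show ?thesis by simp
qed

lemma ext_identity:
  assumes "length (fst u) \<le> length (snd u) + 1"
  shows "reach_prob f (\<tau> @ [(ob, a)]) * test_prob f (\<tau> @ [(ob, a)]) u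
       = reach_prob f \<tau> * test_prob f \<tau> (ext_test ob a u)"
proof -
  have l: "length (fst (ext_test ob a u)) \<le> length (snd (ext_test ob a u)) + 1"
    using assms by (simp add: ext_test_def)
  show ?thesis
    unfolding test_prob_tpr[OF assms] test_prob_tpr[OF l] reach_snoc
    by (simp add: ext_test_def)
qed



lemma swap_helper:
  "(\<Sum>r\<in>R. w r * (\<Sum>i\<in>I. K r i * y i)) = (\<Sum>i\<in>I. (\<Sum>r\<in>R. w r * K r i) * (y i::real))"
  unfolding sum_distrib_left sum_distrib_right mult.assoc by (rule sum.swap)

lemma bound_core:
  assumes "norm11_le R d X c" "finite R" "\<forall>i<d. \<bar>a i\<bar> \<le> 1"
  shows "\<bar>\<Sum>i<d. a i * (\<Sum>r\<in>R. X i r * x r)\<bar> \<le> c * (\<Sum>r\<in>R. \<bar>x r\<bar>)"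
proof -
  have "\<bar>\<Sum>i<d. a i * (\<Sum>r\<in>R. X i r * x r)\<bar> \<le> (\<Sum>i<d. \<bar>a i * (\<Sum>r\<in>R. X i r * x r)\<bar>)"
    by (rule sum_abs)
  also have "\<dots> \<le> (\<Sum>i<d. (\<Sum>r\<in>R. \<bar>X i r\<bar> * \<bar>x r\<bar>))"
  proof (rule sum_mono)
    fix i assume "i \<in> {..<d}"
    then have "\<bar>a i\<bar> \<le> 1" using assms by auto
    moreover have "\<bar>\<Sum>r\<in>R. X i r * x r\<bar> \<le> (\<Sum>r\<in>R. \<bar>X i r\<bar> * \<bar>x r\<bar>)"
      using sum_abs[of "\<lambda>r. X i r * x r" R] by (simp add: abs_mult)
    ultimately show "\<bar>a i * (\<Sum>r\<in>R. X i r * x r)\<bar> \<le> (\<Sum>r\<in>R. \<bar>X i r\<bar> * \<bar>x r\<bar>)"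
      by (simp add: abs_mult mult_le_one mult_le_cancel_right1)
         (metis abs_ge_zero mult_left_le_one_le order_trans)
  qed
  also have "\<dots> = (\<Sum>r\<in>R. \<bar>x r\<bar> * (\<Sum>i<d. \<bar>X i r\<bar>))"
    by (subst sum.swap) (simp add: sum_distrib_left mult.commute)
  also have "\<dots> \<le> (\<Sum>r\<in>R. \<bar>x r\<bar> * c)"
    using assms(1) unfolding norm11_le_def by (intro sum_mono mult_left_mono) auto
  finally show ?thesis by (simp add: sum_distrib_left mult.commute)
qed

lemma pinv_col:
  assumes "is_pinv R d K X" "finite R" "\<forall>r\<in>R. x r = (\<Sum>j<d. K r j * b j)" "r \<in> R"
  shows "x r = (\<Sum>i<d. K r i * (\<Sum>s\<in>R. X i s * x s))"
proof -
  have P1: "\<forall>r\<in>R. \<forall>j<d. (\<Sum>s\<in>R. (\<Sum>i<d. K r i * X i s) * K s j) = K r j"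
    using assms(1) unfolding is_pinv_def Let_def by auto
  have "x r = (\<Sum>j<d. (\<Sum>s\<in>R. (\<Sum>i<d. K r i * X i s) * K s j) * b j)"
    using assms(3,4) P1 by simp
  also have "\<dots> = (\<Sum>s\<in>R. (\<Sum>i<d. K r i * X i s) * (\<Sum>j<d. K s j * b j))"
    using swap_helper[where w="\<lambda>s. \<Sum>i<d. K r i * X i s" and I="{..<d}" and K=K and y=b and R=R] by simp
  also have "\<dots> = (\<Sum>s\<in>R. (\<Sum>i<d. K r i * X i s) * x s)"
    using assms(3) by (intro sum.cong) auto
  also have "\<dots> = (\<Sum>i<d. K r i * (\<Sum>s\<in>R. X i s * x s))"
    by (simp add: sum_distrib_left sum_distrib_right mult.assoc) (rule sum.swap)
  finally show ?thesis .
qed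

lemma pinv_row:
  assumes "is_pinv R d K X" "finite R" "\<forall>r\<in>R. w r = (\<Sum>j<d. K r j * b j)" "r \<in> R"
  shows "w r = (\<Sum>i<d. (\<Sum>s\<in>R. w s * K s i) * X i r)"
proof -
  have P3: "\<forall>r\<in>R. \<forall>s\<in>R. (\<Sum>i<d. K r i * X i s) = (\<Sum>i<d. K s i * X i r)"
    using assms(1) unfolding is_pinv_def Let_def by auto
  have "(\<Sum>i<d. (\<Sum>s\<in>R. w s * K s i) * X i r) = (\<Sum>s\<in>R. w s * (\<Sum>i<d. K s i * X i r))"
    using swap_helper[where w=w and R=R and K=K and y="\<lambda>i. X i r" and I="{..<d}"] by simp
  also have "\<dots> = (\<Sum>s\<in>R. w s * (\<Sum>i<d. K r i * X i s))"
    using P3 assms(4) by (intro sum.cong) auto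
  also have "\<dots> = (\<Sum>i<d. K r i * (\<Sum>s\<in>R. X i s * w s))"
    by (simp add: sum_distrib_left sum_distrib_right mult.assoc mult.commute mult.left_commute) (rule sum.swap)
  also have "\<dots> = w r" using pinv_col[OF assms] by simp
  finally show ?thesis by simp
qed

lemma pinv_bound_x:
  assumes "is_pinv R d K X" "norm11_le R d X c" "finite R"
    and "\<forall>r\<in>R. x r = (\<Sum>j<d. K r j * b j)"
    and "\<forall>j<d. \<bar>\<Sum>r\<in>R. w r * K r j\<bar> \<le> 1"
  shows "\<bar>\<Sum>r\<in>R. w r * x r\<bar> \<le> c * (\<Sum>r\<in>R. \<bar>x r\<bar>)"
proof -
  have "(\<Sum>r\<in>R. w r * x r) = (\<Sum>r\<in>R. w r * (\<Sum>i<d. K r i * (\<Sum>s\<in>R. X i s * x s)))"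
    using pinv_col[OF assms(1,3,4)] by (intro sum.cong) auto
  also have "\<dots> = (\<Sum>i<d. (\<Sum>r\<in>R. w r * K r i) * (\<Sum>s\<in>R. X i s * x s))"
    by (rule swap_helper)
  finally show ?thesis using bound_core[OF assms(2,3), of "\<lambda>i. \<Sum>r\<in>R. w r * K r i" x] assms(5) by simp
qed

lemma pinv_bound_w:
  assumes "is_pinv R d K X" "norm11_le R d X c" "finite R"
    and "\<forall>r\<in>R. w r = (\<Sum>j<d. K r j * b j)"
    and "\<forall>j<d. \<bar>\<Sum>r\<in>R. w r * K r j\<bar> \<le> 1"
  shows "\<bar>\<Sum>r\<in>R. w r * x r\<bar> \<le> c * (\<Sum>r\<in>R. \<bar>x r\<bar>)"
proof -
  have "(\<Sum>r\<in>R. w r * x r) = (\<Sum>r\<in>R. (\<Sum>i<d. (\<Sum>s\<in>R. w s * K s i) * X i r) * x r)"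
    using pinv_row[OF assms(1,3,4)] by (intro sum.cong) auto
  also have "\<dots> = (\<Sum>i<d. (\<Sum>s\<in>R. w s * K s i) * (\<Sum>r\<in>R. X i r * x r))"
    by (simp add: sum_distrib_left sum_distrib_right mult.assoc mult.commute mult.left_commute) (rule sum.swap)
  finally show ?thesis using bound_core[OF assms(2,3), of "\<lambda>i. \<Sum>r\<in>R. w r * K r i" x] assms(5) by simp
qed



lemma cmb_unfold:
  assumes "core_matrix_bound H U f h c"
  shows "\<exists>d K X. is_pinv (U (h+1)) d K X \<and> norm11_le (U (h+1)) d X c \<and>
     (\<forall>j<d. \<exists>\<tau>'. length \<tau>' = h \<and> (\<forall>r. K r j = test_prob f \<tau>' r)) \<and>
     (\<forall>\<tau>. length \<tau> = h \<longrightarrow> (\<exists>b. \<forall>u\<in>U (h+1). test_prob f \<tau> u = (\<Sum>i<d. K u i * b i)))"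
proof (cases "h = 0")
  case True
  then obtain X where X: "is_pinv (U 1) 1 (\<lambda>u i. test_prob f [] u) X" "norm11_le (U 1) 1 X c"
    using assms unfolding core_matrix_bound_def by auto
  show ?thesis
    apply (rule exI[of _ 1], rule exI[of _ "\<lambda>u i. test_prob f [] u"], rule exI[of _ X])
    using X True by (auto intro!: exI[of _ "\<lambda>_. 1"])
next
  case False
  then obtain \<tau>s X where T: "length \<tau>s = d_psr H f h" "\<forall>\<tau>\<in>set \<tau>s. length \<tau> = h"
     "\<forall>\<tau>. length \<tau> = h \<longrightarrow> (\<exists>a::nat \<Rightarrow> real. \<forall>u\<in>U (h+1).
               test_prob f \<tau> u = (\<Sum>i<length \<tau>s. a i * test_prob f (\<tau>s ! i) u))"
     "is_pinv (U (h+1)) (length \<tau>s) (\<lambda>u i. test_prob f (\<tau>s ! i) u) X"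
     "norm11_le (U (h+1)) (length \<tau>s) X c"
    using assms unfolding core_matrix_bound_def by auto
  show ?thesis
    apply (rule exI[of _ "length \<tau>s"], rule exI[of _ "\<lambda>u i. test_prob f (\<tau>s ! i) u"], rule exI[of _ X])
    using T by (auto simp: mult.commute)
qed

lemma m_vec_props:
  fixes f :: "('o::finite,'a::finite) model"
  assumes "1 \<le> h" "h \<le> H" "core_tests H U f" "core_matrix_bound H U f (h-1) c" "is_test H h t"
  shows "(\<exists>cc. \<forall>v\<in>U h. m_vec H U f h t v = (\<Sum>\<tau>\<in>{\<tau>. length \<tau> = h - 1}. cc \<tau> * test_prob f \<tau> v))
       \<and> (\<forall>\<tau>. length \<tau> = h - 1 \<longrightarrow> test_prob f \<tau> t = (\<Sum>v\<in>U h. m_vec H U f h t v * test_prob f \<tau> v))"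
proof -
  define S where "S = {\<tau>::('o,'a) hist. length \<tau> = h - 1}"
  have finS: "finite S" unfolding S_def by (rule finite_len)
  have finU: "finite (U h)" and m0ex: "\<exists>m::('o,'a) test \<Rightarrow> real. \<forall>\<tau>. length \<tau> = h - 1 \<longrightarrow>
              test_prob f \<tau> t = (\<Sum>u\<in>U h. m u * test_prob f \<tau> u)"
    using assms unfolding core_tests_def by (auto simp del: split_paired_All)
  then obtain m0 where m0: "\<forall>\<tau>. length \<tau> = h - 1 \<longrightarrow> test_prob f \<tau> t = (\<Sum>u\<in>U h. m0 u * test_prob f \<tau> u)"
    by blast
  have hh: "h - 1 + 1 = h" using assms by simp
  obtain d K X where dKX: "is_pinv (U h) d K X" "norm11_le (U h) d X c"
     "\<forall>j<d. \<exists>\<tau>'. length \<tau>' = h - 1 \<and> (\<forall>r. K r j = test_prob f \<tau>' r)"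
     "\<forall>\<tau>. length \<tau> = h - 1 \<longrightarrow> (\<exists>b. \<forall>u\<in>U h. test_prob f \<tau> u = (\<Sum>i<d. K u i * b i))"
    using cmb_unfold[OF assms(4)] unfolding hh by blast
  obtain T where T: "\<forall>j<d. length (T j) = h - 1 \<and> (\<forall>r. K r j = test_prob f (T j) r)"
    using dKX(3) by metis
  define P where "P = (\<lambda>m::('o,'a) test \<Rightarrow> real. (\<forall>v. v \<notin> U h \<longrightarrow> m v = 0) \<and>
      (\<exists>c::('o,'a) hist \<Rightarrow> real. \<forall>v\<in>U h. m v = (\<Sum>\<tau>\<in>{\<tau>. length \<tau> = h - 1}. c \<tau> * test_prob f \<tau> v)) \<and>
      (\<forall>\<tau>. length \<tau> = h - 1 \<longrightarrow> test_prob f \<tau> t = (\<Sum>v\<in>U h. m v * test_prob f \<tau> v)))"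
  define y where "y i = (\<Sum>s\<in>U h. X i s * m0 s)" for i
  define m' where "m' v = (if v \<in> U h then (\<Sum>i<d. K v i * y i) else 0)" for v
  have "P m'"
  proof -
    define cc where "cc \<tau> = (\<Sum>i<d. if T i = \<tau> then y i else 0)" for \<tau>
    have span: "\<forall>v\<in>U h. m' v = (\<Sum>\<tau>\<in>S. cc \<tau> * test_prob f \<tau> v)"
    proof
      fix v assume v: "v \<in> U h"
      have "(\<Sum>\<tau>\<in>S. cc \<tau> * test_prob f \<tau> v) = (\<Sum>\<tau>\<in>S. \<Sum>i<d. (if T i = \<tau> then y i * test_prob f \<tau> v else 0))"
        unfolding cc_def sum_distrib_right by (intro sum.cong) auto
      also have "\<dots> = (\<Sum>i<d. \<Sum>\<tau>\<in>S. (if T i = \<tau> then y i * test_prob f \<tau> v else 0))"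
        by (rule sum.swap)
      also have "\<dots> = (\<Sum>i<d. y i * test_prob f (T i) v)"
        using T finS by (intro sum.cong) (auto simp: S_def)
      also have "\<dots> = m' v" using v T by (auto simp: m'_def mult.commute simp del: split_paired_All intro!: sum.cong)
      finally show "m' v = (\<Sum>\<tau>\<in>S. cc \<tau> * test_prob f \<tau> v)" by simp
    qed
    have ident: "\<forall>\<tau>. length \<tau> = h - 1 \<longrightarrow> test_prob f \<tau> t = (\<Sum>v\<in>U h. m' v * test_prob f \<tau> v)"
    proof (intro allI impI)
      fix \<tau> :: "('o,'a) hist" assume l: "length \<tau> = h - 1"
      obtain b where b: "\<forall>u\<in>U h. test_prob f \<tau> u = (\<Sum>i<d. K u i * b i)" using dKX(4) l by blast
      have row: "\<forall>r\<in>U h. test_prob f \<tau> r = (\<Sum>i<d. (\<Sum>s\<in>U h. test_prob f \<tau> s * K s i) * X i r)"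
        using pinv_row[OF dKX(1) finU b] by blast
      have "test_prob f \<tau> t = (\<Sum>s\<in>U h. m0 s * test_prob f \<tau> s)" using m0 l by blast
      also have "\<dots> = (\<Sum>s\<in>U h. m0 s * (\<Sum>i<d. (\<Sum>v\<in>U h. test_prob f \<tau> v * K v i) * X i s))"
        using row by (intro sum.cong) auto
      also have "\<dots> = (\<Sum>i<d. (\<Sum>v\<in>U h. test_prob f \<tau> v * K v i) * y i)"
        unfolding y_def sum_distrib_left sum_distrib_right
        by (subst sum.swap) (simp add: mult.commute mult.left_commute)
      also have "\<dots> = (\<Sum>v\<in>U h. test_prob f \<tau> v * (\<Sum>i<d. K v i * y i))"
        by (rule swap_helper[symmetric])
      also have "\<dots> = (\<Sum>v\<in>U h. m' v * test_prob f \<tau> v)"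
        by (auto simp: m'_def mult.commute intro!: sum.cong)
      finally show "test_prob f \<tau> t = (\<Sum>v\<in>U h. m' v * test_prob f \<tau> v)" .
    qed
    show ?thesis unfolding P_def using span ident by (auto simp: m'_def S_def)
  qed
  moreover have "m1 = m2" if PM1: "P m1" and PM2: "P m2" for m1 m2
  proof
    fix v
    show "m1 v = m2 v"
    proof (cases "v \<in> U h")
      case False then show ?thesis using PM1 PM2 unfolding P_def by (metis (mono_tags, lifting))
    next
      case True
      obtain c1 where c1: "\<forall>v\<in>U h. m1 v = (\<Sum>\<tau>\<in>S. c1 \<tau> * test_prob f \<tau> v)" using PM1 unfolding P_def S_def by blast
      obtain c2 where c2: "\<forall>v\<in>U h. m2 v = (\<Sum>\<tau>\<in>S. c2 \<tau> * test_prob f \<tau> v)" using PM2 unfolding P_def S_def by blast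
      have orth: "(\<Sum>v\<in>U h. (m1 v - m2 v) * test_prob f \<tau> v) = 0" if "\<tau> \<in> S" for \<tau>
        using PM1 PM2 that unfolding P_def S_def by (simp add: left_diff_distrib sum_subtractf)
      have "(\<Sum>v\<in>U h. (m1 v - m2 v) * (m1 v - m2 v)) = (\<Sum>v\<in>U h. (m1 v - m2 v) * (\<Sum>\<tau>\<in>S. (c1 \<tau> - c2 \<tau>) * test_prob f \<tau> v))"
        using c1 c2 by (intro sum.cong) (auto simp: left_diff_distrib sum_subtractf)
      also have "\<dots> = (\<Sum>\<tau>\<in>S. (c1 \<tau> - c2 \<tau>) * (\<Sum>v\<in>U h. (m1 v - m2 v) * test_prob f \<tau> v))"
        unfolding sum_distrib_left by (subst sum.swap) (simp add: mult.commute mult.left_commute)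
      also have "\<dots> = 0" using orth by simp
      finally have "(\<Sum>v\<in>U h. (m1 v - m2 v) * (m1 v - m2 v)) = 0" .
      then have "\<forall>v\<in>U h. (m1 v - m2 v) * (m1 v - m2 v) = 0"
        using finU by (subst sum_nonneg_eq_0_iff[symmetric]) auto
      then show ?thesis using True by auto
    qed
  qed
  ultimately have "\<exists>!m. P m" by blast
  then have "P (m_vec H U f h t)" unfolding m_vec_def P_def[symmetric] by (rule theI')
  then show ?thesis unfolding P_def by blast
qed



definition good :: "nat \<Rightarrow> (nat \<Rightarrow> ('o,'a) test set) \<Rightarrow> real \<Rightarrow> ('o::finite,'a::finite) model \<Rightarrow> bool" where
  "good H U \<alpha> f \<longleftrightarrow> valid_model H f \<and> core_tests H U f \<and>
        (\<forall>h\<in>{0..H-1}. core_matrix_bound H U f h (1/\<alpha>)) \<and> (\<forall>ob. ([ob], []) \<in> U H) \<and> 1 \<le> H"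

definition beta :: "('o,'a) model \<Rightarrow> ('o,'a) hist \<Rightarrow> ('o,'a) test \<Rightarrow> real" where
  "beta f \<tau> v = reach_prob f \<tau> * test_prob f \<tau> v"

fun Wf :: "nat \<Rightarrow> (nat \<Rightarrow> ('o,'a) test set) \<Rightarrow> ('o::finite,'a::finite) model \<Rightarrow> ('o,'a) hist \<Rightarrow> ('o,'a) test \<Rightarrow> real" where
  "Wf H U f [] v = 0"
| "Wf H U f [x] v = (if v = ([fst x], []) then 1 else 0)"
| "Wf H U f (x # p # w) v = (\<Sum>u\<in>U (H - length w). Wf H U f (p # w) u *
        m_vec H U f (H - length (p # w)) (ext_test (fst x) (snd x) u) v)"

lemma goodD:
  assumes "good H U \<alpha> f"
  shows "valid_model H f" "core_tests H U f" "\<And>h. h \<le> H - 1 \<Longrightarrow> core_matrix_bound H U f h (1/\<alpha>)"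
    "\<And>ob. ([ob], []) \<in> U H" "1 \<le> H"
    "\<And>h. 1 \<le> h \<Longrightarrow> h \<le> H \<Longrightarrow> finite (U h)"
    "\<And>h u. 1 \<le> h \<Longrightarrow> h \<le> H \<Longrightarrow> u \<in> U h \<Longrightarrow> is_test H h u"
  using assms unfolding good_def core_tests_def by auto

lemma I1:
  assumes g: "good H U \<alpha> f" and l: "length \<tau> = k" "k + 1 \<le> H - 1" and u: "u \<in> U (k+2)"
  shows "beta f (\<tau> @ [(ob, a)]) u = (\<Sum>v\<in>U (k+1). m_vec H U f (k+1) (ext_test ob a u) v * beta f \<tau> v)"
proof -
  have tu: "is_test H (k+2) u" using goodD(7)[OF g, of "k+2" u] u l by auto
  have te: "is_test H (k+1) (ext_test ob a u)" using tu unfolding is_test_def ext_test_def by auto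
  have mp: "\<forall>\<tau>. length \<tau> = k + 1 - 1 \<longrightarrow> test_prob f \<tau> (ext_test ob a u)
        = (\<Sum>v\<in>U (k+1). m_vec H U f (k+1) (ext_test ob a u) v * test_prob f \<tau> v)"
    using m_vec_props[of "k+1" H U f "1/\<alpha>" "ext_test ob a u"] goodD[OF g] l te by auto
  have "beta f (\<tau> @ [(ob, a)]) u = reach_prob f \<tau> * test_prob f \<tau> (ext_test ob a u)"
    unfolding beta_def by (rule ext_identity) (use tu in \<open>auto simp: is_test_def\<close>)
  also have "\<dots> = (\<Sum>v\<in>U (k+1). m_vec H U f (k+1) (ext_test ob a u) v * beta f \<tau> v)"
    using mp l by (simp add: beta_def sum_distrib_left mult.assoc mult.commute mult.left_commute)
  finally show ?thesis .
qed

lemma sum_single_U: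
  assumes "finite S" "z \<in> S"
  shows "(\<Sum>v\<in>S. (if v = z then 1 else 0) * x v) = (x z :: real)"
  using assms by (simp add: if_distrib[of "\<lambda>c. c * x _"] sum.delta' cong: if_cong)

lemma F1:
  assumes g: "good H U \<alpha> f"
  shows "\<omega> \<noteq> [] \<Longrightarrow> length \<tau> + length \<omega> = H \<Longrightarrow>
     reach_prob f (\<tau> @ \<omega>) = (\<Sum>v\<in>U (length \<tau> + 1). Wf H U f \<omega> v * beta f \<tau> v)"
proof (induction \<omega> arbitrary: \<tau>)
  case Nil then show ?case by simp
next
  case (Cons x \<omega>)
  show ?case
  proof (cases \<omega>)
    case Nil
    then have lH: "length \<tau> + 1 = H" using Cons.prems by simp
    have fin: "finite (U H)" using goodD[OF g] by auto
    have "(\<Sum>v\<in>U (length \<tau> + 1). Wf H U f (x # \<omega>) v * beta f \<tau> v) = beta f \<tau> ([fst x], [])"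
      unfolding Nil lH using sum_single_U[OF fin goodD(4)[OF g]] by simp
    also have "\<dots> = reach_prob f (\<tau> @ [x])"
      unfolding beta_def reach_snoc by (subst test_prob_tpr) auto
    finally show ?thesis using Nil by simp
  next
    case (Cons p w)
    have l: "length \<tau> + 2 + length w = H" using Cons.prems(2) Cons by simp
    have IH: "reach_prob f ((\<tau> @ [x]) @ (p # w)) = (\<Sum>u\<in>U (length \<tau> + 2). Wf H U f (p # w) u * beta f (\<tau> @ [x]) u)"
      using Cons.IH[of "\<tau> @ [x]"] Cons l by simp
    have hw: "H - length w = length \<tau> + 2" "H - length (p # w) = length \<tau> + 1" using l by auto
    have "reach_prob f (\<tau> @ x # \<omega>) = (\<Sum>u\<in>U (length \<tau> + 2). Wf H U f (p # w) u *
          (\<Sum>v\<in>U (length \<tau>+1). m_vec H U f (length \<tau>+1) (ext_test (fst x) (snd x) u) v * beta f \<tau> v))"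
    proof -
      have "reach_prob f (\<tau> @ x # \<omega>) = reach_prob f ((\<tau> @ [x]) @ (p # w))" using Cons by simp
      also have "\<dots> = (\<Sum>u\<in>U (length \<tau> + 2). Wf H U f (p # w) u * beta f (\<tau> @ [(fst x, snd x)]) u)"
        using IH by simp
      finally show ?thesis
        using I1[OF g, of \<tau> "length \<tau>" _ "fst x" "snd x"] l by (auto intro!: sum.cong)
    qed
    also have "\<dots> = (\<Sum>v\<in>U (length \<tau>+1). (\<Sum>u\<in>U (length \<tau> + 2). Wf H U f (p # w) u *
          m_vec H U f (length \<tau>+1) (ext_test (fst x) (snd x) u) v) * beta f \<tau> v)"
      unfolding sum_distrib_left sum_distrib_right by (subst sum.swap) (simp add: mult.assoc)
    also have "\<dots> = (\<Sum>v\<in>U (length \<tau> + 1). Wf H U f (x # \<omega>) v * beta f \<tau> v)"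
      unfolding Cons by (simp only: Wf.simps hw)
    finally show ?thesis .
  qed
qed



lemma F2:
  assumes g: "good H U \<alpha> f" and l: "2 \<le> length \<omega>" "length \<omega> \<le> H"
  shows "\<exists>cc. \<forall>v\<in>U (H - length \<omega> + 1). Wf H U f \<omega> v =
           (\<Sum>\<tau>\<in>{\<tau>. length \<tau> = H - length \<omega>}. cc \<tau> * test_prob f \<tau> v)"
proof -
  obtain x p w where \<omega>: "\<omega> = x # p # w" using l(1) by (cases \<omega>; cases "tl \<omega>") auto
  define k where "k = H - length \<omega>"
  have hw: "H - length w = k + 2" "H - length (p # w) = k + 1" "H - length \<omega> + 1 = k + 1"
    using l unfolding k_def \<omega> by auto
  have "\<forall>u\<in>U (k+2). \<exists>c. \<forall>v\<in>U (k+1). m_vec H U f (k+1) (ext_test (fst x) (snd x) u) v =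
           (\<Sum>\<tau>\<in>{\<tau>. length \<tau> = k}. c \<tau> * test_prob f \<tau> v)"
  proof
    fix u assume u: "u \<in> U (k+2)"
    have tu: "is_test H (k+2) u" using goodD(7)[OF g, of "k+2" u] u hw l unfolding k_def by auto
    have te: "is_test H (k+1) (ext_test (fst x) (snd x) u)" using tu unfolding is_test_def ext_test_def by auto
    show "\<exists>c. \<forall>v\<in>U (k+1). m_vec H U f (k+1) (ext_test (fst x) (snd x) u) v =
           (\<Sum>\<tau>\<in>{\<tau>. length \<tau> = k}. c \<tau> * test_prob f \<tau> v)"
      using m_vec_props[of "k+1" H U f "1/\<alpha>" "ext_test (fst x) (snd x) u"] goodD[OF g] te l hw
      unfolding k_def by auto
  qed
  from bchoice[OF this] obtain C where C: "\<forall>u\<in>U (k+2). \<forall>v\<in>U (k+1). m_vec H U f (k+1) (ext_test (fst x) (snd x) u) v =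
           (\<Sum>\<tau>\<in>{\<tau>. length \<tau> = k}. C u \<tau> * test_prob f \<tau> v)"
    by blast
  define cc where "cc \<tau> = (\<Sum>u\<in>U (k+2). Wf H U f (p # w) u * C u \<tau>)" for \<tau>
  have "\<forall>v\<in>U (k + 1). Wf H U f \<omega> v = (\<Sum>\<tau>\<in>{\<tau>. length \<tau> = k}. cc \<tau> * test_prob f \<tau> v)"
  proof
    fix v assume v: "v \<in> U (k+1)"
    have "Wf H U f \<omega> v = (\<Sum>u\<in>U (k+2). Wf H U f (p # w) u * m_vec H U f (k+1) (ext_test (fst x) (snd x) u) v)"
      unfolding \<omega> by (simp only: Wf.simps hw)
    also have "\<dots> = (\<Sum>u\<in>U (k+2). Wf H U f (p # w) u * (\<Sum>\<tau>\<in>{\<tau>. length \<tau> = k}. C u \<tau> * test_prob f \<tau> v))"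
      using C v by (intro sum.cong) auto
    also have "\<dots> = (\<Sum>\<tau>\<in>{\<tau>. length \<tau> = k}. cc \<tau> * test_prob f \<tau> v)"
      unfolding cc_def by (rule swap_helper)
    finally show "Wf H U f \<omega> v = (\<Sum>\<tau>\<in>{\<tau>. length \<tau> = k}. cc \<tau> * test_prob f \<tau> v)" .
  qed
  then show ?thesis unfolding k_def by auto
qed

lemma F3:
  assumes g: "good H U \<alpha> f" and ne: "\<omega> \<noteq> []" and l: "length \<tau> + length \<omega> = H"
  shows "\<bar>\<Sum>v\<in>U (length \<tau> + 1). Wf H U f \<omega> v * test_prob f \<tau> v\<bar> \<le> 1"
proof (cases "reach_prob f \<tau> = 0")
  case True
  then show ?thesis by (simp add: test_prob_def)
next
  case False
  have vm: "valid_model H f" using goodD[OF g] by auto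
  have b: "0 \<le> reach_prob f (\<tau> @ \<omega>)" "reach_prob f (\<tau> @ \<omega>) \<le> reach_prob f \<tau>"
    using reach_app_bounds[OF vm, of \<tau> \<omega>] l by auto
  define S where "S = (\<Sum>v\<in>U (length \<tau> + 1). Wf H U f \<omega> v * test_prob f \<tau> v)"
  have "reach_prob f (\<tau> @ \<omega>) = reach_prob f \<tau> * S" unfolding S_def
    using F1[OF g ne l] by (simp add: beta_def sum_distrib_left mult.assoc mult.commute mult.left_commute)
  moreover have "0 < reach_prob f \<tau>" using False b by auto
  ultimately have "0 \<le> S" "S \<le> 1" using b
    by (simp_all add: zero_le_mult_iff mult_le_cancel_left_pos)
  then show ?thesis unfolding S_def by simp
qed



lemma F4:
  assumes g: "good H U \<alpha> f" and a1: "\<alpha> \<le> 1" and a0: "0 < \<alpha>" and ne: "\<omega> \<noteq> []" and l: "length \<omega> \<le> H"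
  shows "\<bar>\<Sum>v\<in>U (H - length \<omega> + 1). Wf H U f \<omega> v * x v\<bar> \<le> (1/\<alpha>) * (\<Sum>v\<in>U (H - length \<omega> + 1). \<bar>x v\<bar>)"
proof (cases "length \<omega> = 1")
  case True
  then obtain y where \<omega>: "\<omega> = [y]" by (cases \<omega>) auto
  have hh: "H - length \<omega> + 1 = H" using \<omega> goodD(5)[OF g] by simp
  have fin: "finite (U H)" using goodD[OF g] by auto
  have "\<bar>\<Sum>v\<in>U H. Wf H U f \<omega> v * x v\<bar> = \<bar>x ([fst y], [])\<bar>"
    unfolding \<omega> using sum_single_U[OF fin goodD(4)[OF g]] by simp
  also have "\<dots> \<le> (\<Sum>v\<in>U H. \<bar>x v\<bar>)"
    by (rule member_le_sum[where f="\<lambda>v. \<bar>x v\<bar>"]) (use fin goodD(4)[OF g] in auto)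
  also have "\<dots> \<le> (1/\<alpha>) * (\<Sum>v\<in>U H. \<bar>x v\<bar>)"
  proof -
    have "1 \<le> 1/\<alpha>" using a0 a1 by simp
    moreover have "0 \<le> (\<Sum>v\<in>U H. \<bar>x v\<bar>)" by (simp add: sum_nonneg)
    ultimately show ?thesis using mult_right_mono[of 1 "1/\<alpha>" "\<Sum>v\<in>U H. \<bar>x v\<bar>"] by simp
  qed
  finally show ?thesis unfolding hh .
next
  case False
  then have l2: "2 \<le> length \<omega>" using ne by (cases \<omega>) (auto simp: Suc_le_eq)
  define k where "k = H - length \<omega>"
  have kk: "H - length \<omega> + 1 = k + 1" unfolding k_def by simp
  have kH: "k \<le> H - 1" using l2 unfolding k_def by simp
  have fin: "finite (U (k+1))" using goodD(6)[OF g, of "k+1"] l2 l unfolding k_def by auto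
  obtain d K X where dKX: "is_pinv (U (k+1)) d K X" "norm11_le (U (k+1)) d X (1/\<alpha>)"
     "\<forall>j<d. \<exists>\<tau>'. length \<tau>' = k \<and> (\<forall>r. K r j = test_prob f \<tau>' r)"
     "\<forall>\<tau>. length \<tau> = k \<longrightarrow> (\<exists>b. \<forall>u\<in>U (k+1). test_prob f \<tau> u = (\<Sum>i<d. K u i * b i))"
    using cmb_unfold[OF goodD(3)[OF g kH]] by blast
  obtain B where B: "\<forall>\<tau>. length \<tau> = k \<longrightarrow> (\<forall>u\<in>U (k+1). test_prob f \<tau> u = (\<Sum>i<d. K u i * B \<tau> i))"
    using dKX(4) by metis
  obtain cc where cc: "\<forall>v\<in>U (k+1). Wf H U f \<omega> v = (\<Sum>\<tau>\<in>{\<tau>. length \<tau> = k}. cc \<tau> * test_prob f \<tau> v)"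
    using F2[OF g l2 l] unfolding k_def by auto
  have wcol: "\<forall>r\<in>U (k+1). Wf H U f \<omega> r = (\<Sum>j<d. K r j * (\<Sum>\<tau>\<in>{\<tau>. length \<tau> = k}. cc \<tau> * B \<tau> j))"
  proof
    fix r assume r: "r \<in> U (k+1)"
    have "Wf H U f \<omega> r = (\<Sum>\<tau>\<in>{\<tau>. length \<tau> = k}. cc \<tau> * (\<Sum>j<d. K r j * B \<tau> j))"
      using cc B r by (auto intro!: sum.cong)
    also have "\<dots> = (\<Sum>j<d. K r j * (\<Sum>\<tau>\<in>{\<tau>. length \<tau> = k}. cc \<tau> * B \<tau> j))"
      unfolding sum_distrib_left by (subst sum.swap) (simp add: mult.commute mult.left_commute)
    finally show "Wf H U f \<omega> r = (\<Sum>j<d. K r j * (\<Sum>\<tau>\<in>{\<tau>. length \<tau> = k}. cc \<tau> * B \<tau> j))" .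
  qed
  have bnd: "\<forall>j<d. \<bar>\<Sum>r\<in>U (k+1). Wf H U f \<omega> r * K r j\<bar> \<le> 1"
  proof (intro allI impI)
    fix j assume j: "j < d"
    then obtain \<tau>' where t: "length \<tau>' = k" "\<forall>r. K r j = test_prob f \<tau>' r" using dKX(3) by blast
    have "length \<tau>' + length \<omega> = H" using t l unfolding k_def by simp
    then show "\<bar>\<Sum>r\<in>U (k+1). Wf H U f \<omega> r * K r j\<bar> \<le> 1"
      unfolding t(2)[rule_format] using F3[OF g ne, of \<tau>'] t(1) by simp
  qed
  show ?thesis unfolding kk by (rule pinv_bound_w[OF dKX(1,2) fin wcol bnd])
qed


lemma exists_reach:
  assumes "valid_model H f" "n \<le> H"
  shows "\<exists>\<tau>::('o::finite,'a) hist. length \<tau> = n \<and> 0 < reach_prob f \<tau>"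
  using assms(2)
proof (induction n)
  case 0
  then show ?case by (intro exI[of _ "[]"]) simp
next
  case (Suc n)
  then obtain \<tau> where t: "length \<tau> = n" "0 < reach_prob f \<tau>" by auto
  have s: "(\<Sum>x\<in>UNIV. f \<tau> x) = 1" and nn: "\<forall>x. 0 \<le> f \<tau> x" using assms(1) Suc.prems t unfolding valid_model_def by auto
  have "\<exists>x. 0 < f \<tau> x"
  proof (rule ccontr)
    assume "\<not> ?thesis"
    then have "\<forall>x. f \<tau> x \<le> 0" by (simp add: not_less)
    then have "\<forall>x. f \<tau> x = 0" using nn by (meson antisym)
    then show False using s by simp
  qed
  then obtain x where x: "0 < f \<tau> x" by blast
  show ?case
    by (rule exI[of _ "\<tau> @ [(x, undefined)]"]) (use t x in \<open>simp add: reach_snoc\<close>)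
qed

lemma alpha_le_1:
  fixes f :: "('o::finite,'a::finite) model"
  assumes g: "good H U \<alpha> f" and a0: "0 < \<alpha>"
  shows "\<alpha> \<le> 1"
proof -
  have vm: "valid_model H f" and H1: "1 \<le> H" using goodD[OF g] by auto
  have hh: "H - 1 + 1 = H" using H1 by simp
  have fin: "finite (U H)" using goodD[OF g] H1 by auto
  obtain d K X where dKX: "is_pinv (U H) d K X" "norm11_le (U H) d X (1/\<alpha>)"
     "\<forall>j<d. \<exists>\<tau>'. length \<tau>' = H - 1 \<and> (\<forall>r. K r j = test_prob f \<tau>' r)"
     "\<forall>\<tau>. length \<tau> = H - 1 \<longrightarrow> (\<exists>b. \<forall>u\<in>U H. test_prob f \<tau> u = (\<Sum>i<d. K u i * b i))"
    using cmb_unfold[OF goodD(3)[OF g, of "H-1"]] unfolding hh by auto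
  have UH: "U H = (\<lambda>x. ([x], [])) ` UNIV"
  proof
    show "U H \<subseteq> (\<lambda>x. ([x], [])) ` UNIV"
    proof
      fix u assume "u \<in> U H"
      then have "is_test H H u" using goodD(7)[OF g, of H u] H1 by auto
      then have "snd u = []" "length (fst u) = 1" unfolding is_test_def by auto
      then show "u \<in> (\<lambda>x. ([x], [])) ` UNIV" by (cases u) (auto simp: length_Suc_conv)
    qed
    show "(\<lambda>x. ([x], [])) ` UNIV \<subseteq> U H" using goodD(4)[OF g] by auto
  qed
  have inj: "inj (\<lambda>x. ([x], []) :: ('o list \<times> 'a list))" by (auto simp: inj_def)
  obtain \<tau> where t: "length \<tau> = H - 1" "0 < reach_prob f \<tau>" using exists_reach[OF vm, of "H-1"] by auto
  obtain b where b: "\<forall>u\<in>U H. test_prob f \<tau> u = (\<Sum>i<d. K u i * b i)" using dKX(4) t by blast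
  have tp1: "test_prob f \<tau>' ([x], []) = (if reach_prob f \<tau>' = 0 then 0 else f \<tau>' x)" for \<tau>' x
    by (subst test_prob_tpr) auto
  have "(\<Sum>r\<in>U H. test_prob f \<tau> r) = (\<Sum>x\<in>UNIV. test_prob f \<tau> ([x],[]))"
    unfolding UH using sum.reindex[OF inj, of "test_prob f \<tau>"] by (simp add: comp_def)
  also have "\<dots> = (\<Sum>x\<in>UNIV. f \<tau> x)" using t by (simp add: tp1)
  also have "\<dots> = 1" using vm t H1 unfolding valid_model_def by auto
  finally have s1: "(\<Sum>r\<in>U H. test_prob f \<tau> r) = 1" .
  have nn: "\<forall>r\<in>U H. 0 \<le> test_prob f \<tau> r"
    unfolding UH using t vm H1 valid_model_D(1)[OF vm] by (auto simp: tp1)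
  have bnd: "\<forall>j<d. \<bar>\<Sum>r\<in>U H. 1 * K r j\<bar> \<le> 1"
  proof (intro allI impI)
    fix j assume "j < d"
    then obtain \<tau>' where t': "length \<tau>' = H - 1" "\<forall>r. K r j = test_prob f \<tau>' r" using dKX(3) by blast
    have "(\<Sum>r\<in>U H. test_prob f \<tau>' r) \<le> 1"
      apply (rule sum_test_prob_acts[OF vm _ fin, of \<tau>' "[]"])
      using t' H1 unfolding UH by auto
    moreover have "0 \<le> (\<Sum>r\<in>U H. test_prob f \<tau>' r)"
      unfolding UH using t' H1 valid_model_D(1)[OF vm] by (auto simp: tp1 intro!: sum_nonneg)
    ultimately show "\<bar>\<Sum>r\<in>U H. 1 * K r j\<bar> \<le> 1" unfolding t'(2)[rule_format] by simp
  qed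
  have "\<bar>\<Sum>r\<in>U H. 1 * test_prob f \<tau> r\<bar> \<le> (1/\<alpha>) * (\<Sum>r\<in>U H. \<bar>test_prob f \<tau> r\<bar>)"
    by (rule pinv_bound_x[OF dKX(1,2) fin b bnd])
  then have "1 \<le> 1/\<alpha>" using s1 nn by simp
  then show ?thesis using a0 by (simp add: field_simps)
qed



lemma beta_facts:
  assumes g: "good H U \<alpha> f" and l: "length \<tau> = k" "k + 1 \<le> H"
  shows "\<forall>v\<in>U (k+1). 0 \<le> beta f \<tau> v" "(\<Sum>v\<in>U (k+1). beta f \<tau> v) \<le> card (snd ` U (k+1))"
proof -
  have vm: "valid_model H f" using goodD[OF g] by auto
  have r: "0 \<le> reach_prob f \<tau>" "reach_prob f \<tau> \<le> 1" using reach_bounds[OF vm] l by auto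
  have tst: "\<forall>v\<in>U (k+1). is_test H (k+1) v" using goodD(7)[OF g] l by auto
  have fin: "finite (U (k+1))" using goodD(6)[OF g] l by auto
  have tp: "\<forall>v\<in>U (k+1). 0 \<le> test_prob f \<tau> v"
    using tst test_prob_bounds(1)[OF vm] l unfolding is_test_def by auto
  then show "\<forall>v\<in>U (k+1). 0 \<le> beta f \<tau> v" using r by (auto simp: beta_def)
  have s: "(\<Sum>v\<in>U (k+1). test_prob f \<tau> v) \<le> card (snd ` U (k+1))"
    using sum_test_prob_U[OF vm fin tst] l by simp
  have "(\<Sum>v\<in>U (k+1). beta f \<tau> v) = reach_prob f \<tau> * (\<Sum>v\<in>U (k+1). test_prob f \<tau> v)"
    by (simp add: beta_def sum_distrib_left)
  also have "\<dots> \<le> 1 * (\<Sum>v\<in>U (k+1). test_prob f \<tau> v)"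
    using r tp by (intro mult_right_mono) (auto intro: sum_nonneg)
  finally show "(\<Sum>v\<in>U (k+1). beta f \<tau> v) \<le> card (snd ` U (k+1))" using s by simp
qed

lemma main_bound:
  fixes f g :: "('o::finite,'a::finite) model"
  assumes gf: "good H U \<alpha> f" and gg: "good H U \<alpha> g" and a0: "0 < \<alpha>" and d0: "0 \<le> \<delta>"
    and dm: "\<forall>ob a. \<forall>h\<in>{1..H-1}. \<forall>u\<in>U (h+1). \<forall>v\<in>U h.
          \<bar>m_vec H U f h (ext_test ob a u) v - m_vec H U g h (ext_test ob a u) v\<bar> \<le> \<delta>"
    and dq: "\<forall>v\<in>U 1. \<bar>test_prob f [] v - test_prob g [] v\<bar> \<le> \<delta>"
    and lt: "length \<tau> = H"
    and CU: "\<forall>h\<in>{1..H}. real (card (U h)) \<le> NU" and CA: "\<forall>h\<in>{1..H}. real (card (snd ` U h)) \<le> NA"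
    and NA1: "1 \<le> NA"
  shows "\<bar>reach_prob f \<tau> - reach_prob g \<tau>\<bar> \<le> real H * (\<delta> * NU * NA / \<alpha>)"
proof -
  define B where "B = \<delta> * NU * NA / \<alpha>"
  have a1: "\<alpha> \<le> 1" using alpha_le_1[OF gf a0] .
  have H1: "1 \<le> H" using goodD[OF gf] by auto
  have tne: "\<tau> \<noteq> []" using lt H1 by auto
  define T where "T k = (\<Sum>v\<in>U (k+1). Wf H U f (drop k \<tau>) v * beta g (take k \<tau>) v)" for k
  have A: "reach_prob f \<tau> = (\<Sum>v\<in>U 1. Wf H U f \<tau> v * beta f [] v)"
  proof -
    have "\<tau> \<noteq> []" using lt H1 by auto
    then show ?thesis using F1[OF gf, of \<tau> "[]"] lt by simp
  qed
  have Bq: "T (H - 1) = reach_prob g \<tau>"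
  proof -
    have dr: "drop (H - 1) \<tau> = [\<tau> ! (H - 1)]" using lt H1
      using Cons_nth_drop_Suc[of "H-1" \<tau>] by simp
    have W: "Wf H U f [x] = Wf H U g [x]" for x by (rule ext) simp
    have "reach_prob g (take (H-1) \<tau> @ drop (H-1) \<tau>) = (\<Sum>v\<in>U (length (take (H-1) \<tau>) + 1). Wf H U g (drop (H-1) \<tau>) v * beta g (take (H-1) \<tau>) v)"
      by (rule F1[OF gg]) (use dr lt H1 in auto)
    then show ?thesis unfolding T_def using dr W lt H1 by simp
  qed
  have C: "T k - T (Suc k) = (\<Sum>u\<in>U (k+2). Wf H U f (drop (k+1) \<tau>) u *
        (\<Sum>v\<in>U (k+1). (m_vec H U f (k+1) (ext_test (fst (\<tau>!k)) (snd (\<tau>!k)) u) v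
                      - m_vec H U g (k+1) (ext_test (fst (\<tau>!k)) (snd (\<tau>!k)) u) v) * beta g (take k \<tau>) v))"
    if k: "k < H - 1" for k
  proof -
    obtain p w where pw: "drop (k+1) \<tau> = p # w" using k lt by (cases "drop (k+1) \<tau>") auto
    have dk: "drop k \<tau> = \<tau> ! k # p # w" using Cons_nth_drop_Suc[of k \<tau>] pw k lt by simp
    have lw: "length w + k + 2 = H" using arg_cong[OF pw, of length] lt k by simp
    have hw: "H - length w = k + 2" "H - length (p # w) = k + 1" using lw by auto
    have tk: "take (Suc k) \<tau> = take k \<tau> @ [(fst (\<tau>!k), snd (\<tau>!k))]" using k lt by (simp add: take_Suc_conv_app_nth)
    have T1: "T k = (\<Sum>u\<in>U (k+2). Wf H U f (drop (k+1) \<tau>) u *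
        (\<Sum>v\<in>U (k+1). m_vec H U f (k+1) (ext_test (fst (\<tau>!k)) (snd (\<tau>!k)) u) v * beta g (take k \<tau>) v))"
    proof -
      have "T k = (\<Sum>v\<in>U (k+1). (\<Sum>u\<in>U (k+2). Wf H U f (p # w) u * m_vec H U f (k+1) (ext_test (fst (\<tau>!k)) (snd (\<tau>!k)) u) v) * beta g (take k \<tau>) v)"
        unfolding T_def dk by (simp only: Wf.simps hw)
      also have "\<dots> = (\<Sum>u\<in>U (k+2). Wf H U f (p # w) u *
        (\<Sum>v\<in>U (k+1). m_vec H U f (k+1) (ext_test (fst (\<tau>!k)) (snd (\<tau>!k)) u) v * beta g (take k \<tau>) v))"
        unfolding sum_distrib_left sum_distrib_right by (subst sum.swap) (simp add: mult.assoc)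
      finally show ?thesis unfolding pw .
    qed
    have T2: "T (Suc k) = (\<Sum>u\<in>U (k+2). Wf H U f (drop (k+1) \<tau>) u *
        (\<Sum>v\<in>U (k+1). m_vec H U g (k+1) (ext_test (fst (\<tau>!k)) (snd (\<tau>!k)) u) v * beta g (take k \<tau>) v))"
      unfolding T_def using I1[OF gg, of "take k \<tau>" k _ "fst (\<tau>!k)" "snd (\<tau>!k)"] k lt tk
      by (auto intro!: sum.cong)
    show ?thesis unfolding T1 T2 sum_subtractf[symmetric] right_diff_distrib[symmetric] left_diff_distrib ..
  qed
  have tele: "reach_prob f \<tau> - reach_prob g \<tau> = (\<Sum>v\<in>U 1. Wf H U f \<tau> v * (beta f [] v - beta g [] v))
        + (\<Sum>k<H-1. T k - T (Suc k))"
    unfolding sum_lessThan_telescope' A Bq[symmetric]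
    by (simp add: T_def right_diff_distrib sum_subtractf)
  have NU0: "0 \<le> NU" using CU H1 by (meson atLeastAtMost_iff le_refl of_nat_0_le_iff order.trans)
  have b0: "\<bar>\<Sum>v\<in>U 1. Wf H U f \<tau> v * (beta f [] v - beta g [] v)\<bar> \<le> B"
  proof -
    have "\<bar>\<Sum>v\<in>U 1. Wf H U f \<tau> v * (beta f [] v - beta g [] v)\<bar> \<le> (1/\<alpha>) * (\<Sum>v\<in>U 1. \<bar>beta f [] v - beta g [] v\<bar>)"
      using F4[OF gf a1 a0 tne, of "\<lambda>v. beta f [] v - beta g [] v"] lt by simp
    also have "\<dots> \<le> (1/\<alpha>) * (\<Sum>v\<in>U 1. \<delta>)"
      using dq a0 by (intro mult_left_mono sum_mono) (auto simp: beta_def)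
    also have "\<dots> \<le> (1/\<alpha>) * (NU * \<delta>)"
      using CU H1 a0 d0 by (intro mult_left_mono) (auto intro!: mult_right_mono)
    also have "\<dots> \<le> B" unfolding B_def using a0 d0 NA1 CU H1
      using mult_left_mono[OF NA1, of "NU * \<delta> / \<alpha>"] NU0 by (simp add: mult.commute mult.left_commute)
    finally show ?thesis .
  qed
  have bk: "\<bar>T k - T (Suc k)\<bar> \<le> B" if k: "k < H - 1" for k
  proof -
    define x where "x u = (\<Sum>v\<in>U (k+1). (m_vec H U f (k+1) (ext_test (fst (\<tau>!k)) (snd (\<tau>!k)) u) v
                      - m_vec H U g (k+1) (ext_test (fst (\<tau>!k)) (snd (\<tau>!k)) u) v) * beta g (take k \<tau>) v)" for u
    have lk: "length (take k \<tau>) = k" "k + 1 \<le> H" using k lt by auto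
    have bf: "\<forall>v\<in>U (k+1). 0 \<le> beta g (take k \<tau>) v" "(\<Sum>v\<in>U (k+1). beta g (take k \<tau>) v) \<le> card (snd ` U (k+1))"
      using beta_facts[OF gg lk] by auto
    have xb: "\<bar>x u\<bar> \<le> \<delta> * NA" if u: "u \<in> U (k+2)" for u
    proof -
      have "\<bar>x u\<bar> \<le> (\<Sum>v\<in>U (k+1). \<bar>(m_vec H U f (k+1) (ext_test (fst (\<tau>!k)) (snd (\<tau>!k)) u) v
                      - m_vec H U g (k+1) (ext_test (fst (\<tau>!k)) (snd (\<tau>!k)) u) v) * beta g (take k \<tau>) v\<bar>)"
        unfolding x_def by (rule sum_abs)
      also have "\<dots> \<le> (\<Sum>v\<in>U (k+1). \<delta> * beta g (take k \<tau>) v)"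
      proof (rule sum_mono)
        fix v assume v: "v \<in> U (k+1)"
        have "\<bar>m_vec H U f (k+1) (ext_test (fst (\<tau>!k)) (snd (\<tau>!k)) u) v
                      - m_vec H U g (k+1) (ext_test (fst (\<tau>!k)) (snd (\<tau>!k)) u) v\<bar> \<le> \<delta>"
          using dm k u v by auto
        then show "\<bar>(m_vec H U f (k+1) (ext_test (fst (\<tau>!k)) (snd (\<tau>!k)) u) v
                      - m_vec H U g (k+1) (ext_test (fst (\<tau>!k)) (snd (\<tau>!k)) u) v) * beta g (take k \<tau>) v\<bar>
              \<le> \<delta> * beta g (take k \<tau>) v"
          using bf(1) v by (simp add: abs_mult mult_right_mono)
      qed
      also have "\<dots> = \<delta> * (\<Sum>v\<in>U (k+1). beta g (take k \<tau>) v)" by (simp add: sum_distrib_left)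
      also have "\<dots> \<le> \<delta> * NA"
        using bf(2) CA[rule_format, of "k+1"] lk d0 by (intro mult_left_mono) auto
      finally show ?thesis .
    qed
    have ld: "length (drop (k+1) \<tau>) = H - (k+1)" "drop (k+1) \<tau> \<noteq> []" "length (drop (k+1) \<tau>) \<le> H"
      using k lt by auto
    have hh: "H - length (drop (k+1) \<tau>) + 1 = k + 2" using ld k by auto
    have "\<bar>T k - T (Suc k)\<bar> = \<bar>\<Sum>u\<in>U (k+2). Wf H U f (drop (k+1) \<tau>) u * x u\<bar>"
      using C[OF k] unfolding x_def by simp
    also have "\<dots> \<le> (1/\<alpha>) * (\<Sum>u\<in>U (k+2). \<bar>x u\<bar>)"
      using F4[OF gf a1 a0 ld(2) ld(3), of x] unfolding hh .
    also have "\<dots> \<le> (1/\<alpha>) * (\<Sum>u\<in>U (k+2). \<delta> * NA)"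
      using xb a0 by (intro mult_left_mono sum_mono) auto
    also have "\<dots> = (1/\<alpha>) * (card (U (k+2)) * (\<delta> * NA))" by simp
    also have "\<dots> \<le> (1/\<alpha>) * (NU * (\<delta> * NA))"
      using CU[rule_format, of "k+2"] k a0 d0 NA1 by (intro mult_left_mono mult_right_mono) auto
    also have "\<dots> = B" unfolding B_def by simp
    finally show ?thesis .
  qed
  have "\<bar>reach_prob f \<tau> - reach_prob g \<tau>\<bar> \<le> B + (\<Sum>k<H-1. \<bar>T k - T (Suc k)\<bar>)"
    unfolding tele using b0 sum_abs[of "\<lambda>k. T k - T (Suc k)" "{..<H-1}"] by linarith
  also have "\<dots> \<le> B + (\<Sum>k<H-1. B)" using bk by (intro add_left_mono sum_mono) auto
  also have "\<dots> = real H * B" using H1 by (simp add: algebra_simps of_nat_diff)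
  finally show ?thesis unfolding B_def .
qed



definition ppol :: "('o,'a) policy \<Rightarrow> ('o,'a) hist \<Rightarrow> real" where
  "ppol \<pi> \<tau> = (\<Prod>i<length \<tau>. \<pi> (take i \<tau>) (fst (\<tau> ! i)) (snd (\<tau> ! i)))"

lemma traj_split: "traj_prob f \<pi> \<tau> = reach_prob f \<tau> * ppol \<pi> \<tau>"
  unfolding traj_prob_def reach_prob_def ppol_def by (rule prod.distrib)

lemma ppol_bounds:
  assumes "valid_policy (\<pi> :: ('o,'a::finite) policy)"
  shows "0 \<le> ppol \<pi> \<tau>" "ppol \<pi> \<tau> \<le> 1"
proof -
  have nn: "0 \<le> \<pi> t ob a" for t ob a using assms unfolding valid_policy_def by auto
  have le: "\<pi> t ob a \<le> 1" for t ob a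
  proof -
    have "\<pi> t ob a \<le> (\<Sum>b\<in>UNIV. \<pi> t ob b)" by (rule member_le_sum) (auto simp: nn)
    then show ?thesis using assms unfolding valid_policy_def by auto
  qed
  show "0 \<le> ppol \<pi> \<tau>" unfolding ppol_def by (intro prod_nonneg) (auto simp: nn)
  show "ppol \<pi> \<tau> \<le> 1" unfolding ppol_def by (intro prod_le_1) (auto simp: nn le)
qed

lemma card_prod_type: "CARD('o::finite \<times> 'a::finite) = CARD('o) * CARD('a)"
  by (simp add: card_cartesian_product UNIV_Times_UNIV[symmetric] del: UNIV_Times_UNIV)

theorem lemma15:
  fixes F :: "('o::finite, 'a::finite) model set"
    and fstar :: "('o, 'a) model"
    and H :: nat and U :: "nat \<Rightarrow> ('o, 'a) test set"
    and \<alpha> \<epsilon> :: real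
  assumes "1 \<le> H"
    and "fstar \<in> F"
    and "0 < \<alpha>"
    and "psr_class H U \<alpha> F"
    and "0 < \<epsilon>"
  shows "bracket_number H F \<epsilon> \<le>
           covering_number H U F
             (\<alpha> * \<epsilon> / (8 * real CARD('o) ^ (H + 1) * real CARD('a) ^ H * real H
                        * real (card_UA H U) ^ 2 * real (card_U H U)))"
proof -
  note H1 = assms(1) and a0 = assms(3) and e0 = assms(5)
  define Oc where "Oc = real CARD('o)"
  define Ac where "Ac = real CARD('a)"
  define NU where "NU = real (card_U H U)"
  define NA where "NA = real (card_UA H U)"
  define \<epsilon>' where "\<epsilon>' = \<alpha> * \<epsilon> / (8 * real CARD('o) ^ (H + 1) * real CARD('a) ^ H * real H
                        * real (card_UA H U) ^ 2 * real (card_U H U))"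
  have good: "good H U \<alpha> f" if "f \<in> F" for f
    using assms(4) that H1 unfolding psr_class_def good_def by auto
  have gs: "good H U \<alpha> fstar" using good assms(2) .
  have finU: "\<forall>h\<in>{1..H}. finite (U h)" using goodD(6)[OF gs] by auto
  have CU: "\<forall>h\<in>{1..H}. real (card (U h)) \<le> NU"
    unfolding NU_def card_U_def by (auto intro!: Max_ge)
  have CA: "\<forall>h\<in>{1..H}. real (card (snd ` U h)) \<le> NA"
    unfolding NA_def card_UA_def by (auto intro!: Max_ge)
  have neH: "U H \<noteq> {}" using goodD(4)[OF gs] by blast
  have NA1: "1 \<le> NA"
  proof -
    have "card (snd ` U H) \<ge> 1" using neH finU H1 by (simp add: Suc_le_eq card_gt_0_iff)
    then show ?thesis using CA H1 by force
  qed
  have NU1: "1 \<le> NU"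
  proof -
    have "card (U H) \<ge> 1" using neH finU H1 by (simp add: Suc_le_eq card_gt_0_iff)
    then show ?thesis using CU H1 by force
  qed
  have Oc1: "1 \<le> Oc" unfolding Oc_def by (simp add: Suc_le_eq)
  have Ac1: "1 \<le> Ac" unfolding Ac_def by (simp add: Suc_le_eq)
  have ep: "0 < \<epsilon>'" unfolding \<epsilon>'_def using a0 e0 H1 NA1 NU1
    by (simp add: NA_def[symmetric] NU_def[symmetric])
  define e where "e = \<epsilon> / (2 * (Oc * Ac) ^ H)"
  have key: "real H * (2 * \<epsilon>' * NU * NA / \<alpha>) \<le> e"
  proof -
    have OA: "0 < Oc ^ H" "0 < Ac ^ H" using Oc1 Ac1 by auto
    have "real H * (2 * \<epsilon>' * NU * NA / \<alpha>) = \<epsilon> / (4 * Oc * Oc ^ H * Ac ^ H * NA)"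
      unfolding \<epsilon>'_def Oc_def[symmetric] Ac_def[symmetric] NA_def[symmetric] NU_def[symmetric]
      using a0 H1 NA1 NU1 OA Oc1 by (simp add: field_simps power2_eq_square)
    also have "\<dots> \<le> \<epsilon> / (2 * Oc ^ H * Ac ^ H)"
    proof (rule divide_left_mono)
      have "2 * Oc ^ H * Ac ^ H * 1 \<le> 2 * Oc ^ H * Ac ^ H * (2 * Oc * NA)"
      proof (rule mult_left_mono)
        have "1 * 1 \<le> Oc * NA" using Oc1 NA1 by (intro mult_mono) auto
        then show "1 \<le> 2 * Oc * NA" by simp
        show "0 \<le> 2 * Oc ^ H * Ac ^ H" using OA by simp
      qed
      then show "2 * Oc ^ H * Ac ^ H \<le> 4 * Oc * Oc ^ H * Ac ^ H * NA" by (simp add: algebra_simps)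
    qed (use e0 OA Oc1 NA1 in \<open>auto intro!: mult_pos_pos\<close>)
    also have "\<dots> = e" unfolding e_def by (simp add: power_mult_distrib mult.assoc)
    finally show ?thesis .
  qed
  have cover_bracket: "has_bracket H F \<epsilon> n" if hc: "has_cover H U F \<epsilon>' n" for n
  proof -
    obtain M' Q' where MQ: "\<forall>f\<in>F. \<exists>i<n.
          (\<forall>ob a. \<forall>h\<in>{1..H-1}. \<forall>u\<in>U (h+1). \<forall>v\<in>U h.
              \<bar>m_vec H U f h (ext_test ob a u) v - M' i ob a h u v\<bar> \<le> \<epsilon>') \<and>
          (\<forall>v\<in>U 1. \<bar>test_prob f [] v - Q' i v\<bar> \<le> \<epsilon>')"
      using hc unfolding has_cover_def by blast
    define Cv where "Cv i f \<longleftrightarrow> (\<forall>ob a. \<forall>h\<in>{1..H-1}. \<forall>u\<in>U (h+1). \<forall>v\<in>U h.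
              \<bar>m_vec H U f h (ext_test ob a u) v - M' i ob a h u v\<bar> \<le> \<epsilon>') \<and>
          (\<forall>v\<in>U 1. \<bar>test_prob f [] v - Q' i v\<bar> \<le> \<epsilon>')" for i f
    define rep where "rep i = (SOME f. f \<in> F \<and> Cv i f)" for i
    define g1 where "g1 i \<pi> \<tau> = traj_prob (rep i) \<pi> \<tau> - ppol \<pi> \<tau> * e" for i \<pi> \<tau>
    define g2 where "g2 i \<pi> \<tau> = traj_prob (rep i) \<pi> \<tau> + ppol \<pi> \<tau> * e" for i \<pi> \<tau>
    have e0': "0 \<le> e" unfolding e_def using e0 Oc1 Ac1 by auto
    have width: "(\<Sum>\<tau>\<in>{\<tau>. length \<tau> = H}. \<bar>g1 i \<pi> \<tau> - g2 i \<pi> \<tau>\<bar>) \<le> \<epsilon>"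
      if vp: "valid_policy \<pi>" for i \<pi>
    proof -
      have "(\<Sum>\<tau>\<in>{\<tau>. length \<tau> = H}. \<bar>g1 i \<pi> \<tau> - g2 i \<pi> \<tau>\<bar>) = (\<Sum>\<tau>\<in>{\<tau>. length \<tau> = H}. 2 * e * ppol \<pi> \<tau>)"
        unfolding g1_def g2_def using ppol_bounds(1)[OF vp] e0' by (intro sum.cong) auto
      also have "\<dots> \<le> (\<Sum>\<tau>\<in>{\<tau>::('o,'a) hist. length \<tau> = H}. 2 * e)"
        using ppol_bounds(2)[OF vp] e0' by (intro sum_mono) (simp add: mult_left_le)
      also have "\<dots> = 2 * e * (Oc * Ac) ^ H"
        by (simp add: card_len card_prod_type Oc_def Ac_def)
      also have "\<dots> = \<epsilon>" unfolding e_def using Oc1 Ac1 by simp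
      finally show ?thesis .
    qed
    have covers: "\<exists>i<n. \<forall>\<pi>. valid_policy \<pi> \<longrightarrow> (\<forall>\<tau>. length \<tau> = H \<longrightarrow>
            g1 i \<pi> \<tau> \<le> traj_prob f \<pi> \<tau> \<and> traj_prob f \<pi> \<tau> \<le> g2 i \<pi> \<tau>)" if f: "f \<in> F" for f
    proof -
      obtain i where i: "i < n" "Cv i f" using MQ f unfolding Cv_def by blast
      have r: "rep i \<in> F \<and> Cv i (rep i)" unfolding rep_def by (rule someI[of _ f]) (use f i in auto)
      have dm: "\<forall>ob a. \<forall>h\<in>{1..H-1}. \<forall>u\<in>U (h+1). \<forall>v\<in>U h.
          \<bar>m_vec H U f h (ext_test ob a u) v - m_vec H U (rep i) h (ext_test ob a u) v\<bar> \<le> 2 * \<epsilon>'"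
      proof (intro allI ballI)
        fix ob a h u v assume "h \<in> {1..H-1}" "u \<in> U (h+1)" "v \<in> U h"
        then have "\<bar>m_vec H U f h (ext_test ob a u) v - M' i ob a h u v\<bar> \<le> \<epsilon>'"
             "\<bar>m_vec H U (rep i) h (ext_test ob a u) v - M' i ob a h u v\<bar> \<le> \<epsilon>'"
          using i(2) r unfolding Cv_def by blast+
        then show "\<bar>m_vec H U f h (ext_test ob a u) v - m_vec H U (rep i) h (ext_test ob a u) v\<bar> \<le> 2 * \<epsilon>'"
          by linarith
      qed
      have dq: "\<forall>v\<in>U 1. \<bar>test_prob f [] v - test_prob (rep i) [] v\<bar> \<le> 2 * \<epsilon>'"
      proof
        fix v assume "v \<in> U 1"
        then have "\<bar>test_prob f [] v - Q' i v\<bar> \<le> \<epsilon>'" "\<bar>test_prob (rep i) [] v - Q' i v\<bar> \<le> \<epsilon>'"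
          using i(2) r unfolding Cv_def by blast+
        then show "\<bar>test_prob f [] v - test_prob (rep i) [] v\<bar> \<le> 2 * \<epsilon>'" by linarith
      qed
      have rb: "\<bar>reach_prob f \<tau> - reach_prob (rep i) \<tau>\<bar> \<le> e" if "length \<tau> = H" for \<tau>
      proof -
        have "\<bar>reach_prob f \<tau> - reach_prob (rep i) \<tau>\<bar> \<le> real H * (2 * \<epsilon>' * NU * NA / \<alpha>)"
          using main_bound[OF good[OF f] good[of "rep i"] a0 _ dm dq that CU CA NA1] r ep by simp
        then show ?thesis using key by linarith
      qed
      show ?thesis
      proof (intro exI[of _ i] conjI[OF i(1)] allI impI)
        fix \<pi> :: "('o,'a) policy" and \<tau> :: "('o,'a) hist" assume vp: "valid_policy \<pi>" and l: "length \<tau> = H"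
        have p0: "0 \<le> ppol \<pi> \<tau>" by (rule ppol_bounds(1)[OF vp])
        have "\<bar>traj_prob f \<pi> \<tau> - traj_prob (rep i) \<pi> \<tau>\<bar> = \<bar>reach_prob f \<tau> - reach_prob (rep i) \<tau>\<bar> * ppol \<pi> \<tau>"
          unfolding traj_split using p0 by (simp add: left_diff_distrib[symmetric] abs_mult)
        also have "\<dots> \<le> e * ppol \<pi> \<tau>" using rb[OF l] p0 by (rule mult_right_mono)
        finally have "\<bar>traj_prob f \<pi> \<tau> - traj_prob (rep i) \<pi> \<tau>\<bar> \<le> ppol \<pi> \<tau> * e" by (simp add: mult.commute)
        then show "g1 i \<pi> \<tau> \<le> traj_prob f \<pi> \<tau> \<and> traj_prob f \<pi> \<tau> \<le> g2 i \<pi> \<tau>"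
          unfolding g1_def g2_def by linarith
      qed
    qed
    show ?thesis unfolding has_bracket_def
      by (rule exI[of _ g1], rule exI[of _ g2]) (use width covers in blast)
  qed
  have "{enat n | n. has_cover H U F \<epsilon>' n} \<subseteq> {enat N | N. has_bracket H F \<epsilon> N}"
    using cover_bracket by blast
  then have "Inf {enat N | N. has_bracket H F \<epsilon> N} \<le> Inf {enat n | n. has_cover H U F \<epsilon>' n}"
    by (rule Inf_superset_mono)
  then show ?thesis unfolding bracket_number_def covering_number_def \<epsilon>'_def .
qed


end
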